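(* Let $\mathbb{X}$ be a finite-dimensional Banach space and $n\in\mathbb{N}$. Let $T\in\mathbb{L}(\mathbb{X},\ell_\infty^n)$ with $\|T\|=1$. Then $T$ is $k$-smooth if and only if $M_{T^*}\cap\operatorname{Ext}(B_{\ell_1^n})=\{\pm e_1,\pm e_2,\ldots,\pm e_r\}$ for some $1\leq r\leq n$, $T^*e_i$ is $m_i$-smooth in $\mathbb{X}^*$ for each $1\leq i\leq r$, and $m_1+m_2+\cdots+m_r=k$.
   Context: The dual of $\ell_\infty^n$ is identified with $\ell_1^n$, so the adjoint is $T^*\in\mathbb{L}(\ell_1^n,\mathbb{X}^* )$; $e_1,\ldots,e_n$ is the standard basis of $\ell_1^n$. $B_{\ell_1^n}$ is the closed unit ball and $\operatorname{Ext}$ denotes its extreme points. For an operator $S$, $M_S=\{x:\|x\|=1,\ \|Sx\|=\|S\|\}$. For a Banach space $\mathbb{Z}$ and a unit vector $z$, $J(z)=\{f\in \mathbb{Z}^*:\|f\|=1,\ f(z)=1\}$; $z$ is $k$-smooth if $\dim\operatorname{span} J(z)=k$ (for $T$, in the space $\mathbb{L}(\mathbb{X},\ell_\infty^n)$ with operator norm). *)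

theory Defs
  imports "HOL-Analysis.Analysis"
begin

section \<open>The spaces ell_infinity^n and ell_1^n (index type 'n, n = CARD('n))\<close>

typedef ('n::finite) linf = "UNIV :: ('n \<Rightarrow> real) set" by simp
typedef ('n::finite) lone = "UNIV :: ('n \<Rightarrow> real) set" by simp

setup_lifting type_definition_linf
setup_lifting type_definition_lone

instantiation linf :: (finite) real_vector
begin
lift_definition zero_linf :: "'a linf" is "\<lambda>i. 0" .
lift_definition plus_linf :: "'a linf \<Rightarrow> 'a linf \<Rightarrow> 'a linf" is "\<lambda>x y i. x i + y i" .
lift_definition minus_linf :: "'a linf \<Rightarrow> 'a linf \<Rightarrow> 'a linf" is "\<lambda>x y i. x i - y i" .
lift_definition uminus_linf :: "'a linf \<Rightarrow> 'a linf" is "\<lambda>x i. - x i" .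
lift_definition scaleR_linf :: "real \<Rightarrow> 'a linf \<Rightarrow> 'a linf" is "\<lambda>c x i. c * x i" .
instance
  by standard (transfer; auto simp: algebra_simps fun_eq_iff)+
end

instantiation lone :: (finite) real_vector
begin
lift_definition zero_lone :: "'a lone" is "\<lambda>i. 0" .
lift_definition plus_lone :: "'a lone \<Rightarrow> 'a lone \<Rightarrow> 'a lone" is "\<lambda>x y i. x i + y i" .
lift_definition minus_lone :: "'a lone \<Rightarrow> 'a lone \<Rightarrow> 'a lone" is "\<lambda>x y i. x i - y i" .
lift_definition uminus_lone :: "'a lone \<Rightarrow> 'a lone" is "\<lambda>x i. - x i" .
lift_definition scaleR_lone :: "real \<Rightarrow> 'a lone \<Rightarrow> 'a lone" is "\<lambda>c x i. c * x i" .
instance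
  by standard (transfer; auto simp: algebra_simps fun_eq_iff)+
end

lemma linf_norm_aux:
  fixes x y :: "'n::finite \<Rightarrow> real"
  shows "Max (range (\<lambda>i. \<bar>x i + y i\<bar>)) \<le> Max (range (\<lambda>i. \<bar>x i\<bar>)) + Max (range (\<lambda>i. \<bar>y i\<bar>))"
proof -
  have "\<bar>x i + y i\<bar> \<le> Max (range (\<lambda>i. \<bar>x i\<bar>)) + Max (range (\<lambda>i. \<bar>y i\<bar>))" for i
  proof -
    have "\<bar>x i\<bar> \<le> Max (range (\<lambda>i. \<bar>x i\<bar>))" "\<bar>y i\<bar> \<le> Max (range (\<lambda>i. \<bar>y i\<bar>))"
      by (auto intro: Max_ge)
    then show ?thesis by linarith
  qed
  then show ?thesis by (auto intro: Max.boundedI)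
qed

lemma linf_norm_scale:
  fixes x :: "'n::finite \<Rightarrow> real"
  shows "Max (range (\<lambda>i. \<bar>c * x i\<bar>)) = \<bar>c\<bar> * Max (range (\<lambda>i. \<bar>x i\<bar>))"
proof -
  have "range (\<lambda>i. \<bar>c * x i\<bar>) = (\<lambda>t. \<bar>c\<bar> * t) ` range (\<lambda>i. \<bar>x i\<bar>)"
    by (auto simp: abs_mult)
  also have "Max \<dots> = \<bar>c\<bar> * Max (range (\<lambda>i. \<bar>x i\<bar>))"
    by (rule mono_Max_commute[symmetric]) (auto simp: mono_def mult_left_mono)
  finally show ?thesis .
qed

lemma linf_norm_zero:
  fixes x :: "'n::finite \<Rightarrow> real"
  shows "Max (range (\<lambda>i. \<bar>x i\<bar>)) = 0 \<longleftrightarrow> x = (\<lambda>i. 0)"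
proof
  assume h: "Max (range (\<lambda>i. \<bar>x i\<bar>)) = 0"
  have "\<bar>x i\<bar> \<le> 0" for i using Max_ge[of "range (\<lambda>i. \<bar>x i\<bar>)" "\<bar>x i\<bar>"] h by auto
  then show "x = (\<lambda>i. 0)" by (auto simp: fun_eq_iff)
qed simp

instantiation linf :: (finite) real_normed_vector
begin
lift_definition norm_linf :: "'a linf \<Rightarrow> real" is "\<lambda>x. Max (range (\<lambda>i. \<bar>x i\<bar>))" .
definition sgn_linf :: "'a linf \<Rightarrow> 'a linf" where "sgn_linf x = x /\<^sub>R norm x"
definition dist_linf :: "'a linf \<Rightarrow> 'a linf \<Rightarrow> real" where "dist_linf x y = norm (x - y)"
definition uniformity_linf :: "('a linf \<times> 'a linf) filter" where
  "uniformity_linf = (INF e\<in>{0<..}. principal {(x, y). dist x y < e})"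
definition open_linf :: "'a linf set \<Rightarrow> bool" where
  "open_linf U = (\<forall>x\<in>U. \<forall>\<^sub>F (x', y) in uniformity. x' = x \<longrightarrow> y \<in> U)"
instance
proof
  fix x y :: "'a linf" and a :: real
  show "norm (x + y) \<le> norm x + norm y" by transfer (rule linf_norm_aux)
  show "norm (a *\<^sub>R x) = \<bar>a\<bar> * norm x" by transfer (rule linf_norm_scale)
  show "(norm x = 0) = (x = 0)" by transfer (rule linf_norm_zero)
qed (simp_all add: sgn_linf_def dist_linf_def uniformity_linf_def open_linf_def)
end

instantiation lone :: (finite) real_normed_vector
begin
lift_definition norm_lone :: "'a lone \<Rightarrow> real" is "\<lambda>x. \<Sum>i\<in>UNIV. \<bar>x i\<bar>" .
definition sgn_lone :: "'a lone \<Rightarrow> 'a lone" where "sgn_lone x = x /\<^sub>R norm x"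
definition dist_lone :: "'a lone \<Rightarrow> 'a lone \<Rightarrow> real" where "dist_lone x y = norm (x - y)"
definition uniformity_lone :: "('a lone \<times> 'a lone) filter" where
  "uniformity_lone = (INF e\<in>{0<..}. principal {(x, y). dist x y < e})"
definition open_lone :: "'a lone set \<Rightarrow> bool" where
  "open_lone U = (\<forall>x\<in>U. \<forall>\<^sub>F (x', y) in uniformity. x' = x \<longrightarrow> y \<in> U)"
instance
proof
  fix x y :: "'a lone" and a :: real
  show "norm (x + y) \<le> norm x + norm y"
    by transfer (simp add: sum.distrib[symmetric] sum_mono abs_triangle_ineq)
  show "norm (a *\<^sub>R x) = \<bar>a\<bar> * norm x" by transfer (simp add: abs_mult sum_distrib_left)
  show "(norm x = 0) = (x = 0)" by transfer (simp add: sum_nonneg_eq_0_iff fun_eq_iff)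
qed (simp_all add: sgn_lone_def dist_lone_def uniformity_lone_def open_lone_def)
end

lift_definition unit_vec :: "'n::finite \<Rightarrow> 'n lone" is "\<lambda>i j. if j = i then 1 else 0" .

text \<open>Duality pairing ell_1^n x ell_infinity^n, identifying (ell_infinity^n)* with ell_1^n.\<close>
lift_definition pairing :: "'n::finite lone \<Rightarrow> 'n linf \<Rightarrow> real" is
  "\<lambda>y z. \<Sum>i\<in>UNIV. y i * z i" .

definition adjoint_op :: "('a::real_normed_vector \<Rightarrow>\<^sub>L 'n::finite linf) \<Rightarrow> ('n lone \<Rightarrow>\<^sub>L ('a \<Rightarrow>\<^sub>L real))"
  where "adjoint_op T = Blinfun (\<lambda>y. Blinfun (\<lambda>x. pairing y (blinfun_apply T x)))"

definition Jset :: "'b::real_normed_vector \<Rightarrow> ('b \<Rightarrow>\<^sub>L real) set" where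
  "Jset z = {f. norm f = 1 \<and> blinfun_apply f z = 1}"

definition k_smooth :: "'b::real_normed_vector \<Rightarrow> nat \<Rightarrow> bool" where
  "k_smooth z k \<longleftrightarrow> norm z = 1 \<and> dim (span (Jset z)) = k"

definition M_set :: "('a::real_normed_vector \<Rightarrow>\<^sub>L 'b::real_normed_vector) \<Rightarrow> 'a set" where
  "M_set S = {x. norm x = 1 \<and> norm (blinfun_apply S x) = norm S}"

end

theory Submission
  imports Defs
begin


lemma linf_eq_iff: "(x::'n::finite linf) = y \<longleftrightarrow> (\<forall>i. Rep_linf x i = Rep_linf y i)"
  by (metis Rep_linf_inject ext)

lemma lone_eq_iff: "(x::'n::finite lone) = y \<longleftrightarrow> (\<forall>i. Rep_lone x i = Rep_lone y i)"
  by (metis Rep_lone_inject ext)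

lemma Rep_linf_sum: "Rep_linf (sum f S) j = (\<Sum>i\<in>S. Rep_linf (f i) j)"
  by (induction S rule: infinite_finite_induct) (auto simp: zero_linf.rep_eq plus_linf.rep_eq)

lemma Rep_lone_sum: "Rep_lone (sum f S) j = (\<Sum>i\<in>S. Rep_lone (f i) j)"
  by (induction S rule: infinite_finite_induct) (auto simp: zero_lone.rep_eq plus_lone.rep_eq)

lemma sum_delta_r[simp]: "(\<Sum>j\<in>(UNIV::'n::finite set). f j * (if i = j then 1 else 0)) = (f i::real)"
proof -
  have "(\<Sum>j\<in>(UNIV::'n set). f j * (if i = j then 1 else 0)) = (\<Sum>j\<in>UNIV. if i = j then f j else 0)"
    by (rule sum.cong) auto
  then show ?thesis by simp
qed

lemma sum_delta_r'[simp]: "(\<Sum>j\<in>(UNIV::'n::finite set). f j * (if j = i then 1 else 0)) = (f i::real)"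
proof -
  have "(\<Sum>j\<in>(UNIV::'n set). f j * (if j = i then 1 else 0)) = (\<Sum>j\<in>UNIV. if j = i then f j else 0)"
    by (rule sum.cong) auto
  then show ?thesis by simp
qed

lemma abs_Rep_linf_le: "\<bar>Rep_linf x i\<bar> \<le> norm (x::'n::finite linf)"
  unfolding norm_linf.rep_eq by (rule Max_ge) auto

lemma norm_linf_le: "(\<And>i. \<bar>Rep_linf x i\<bar> \<le> c) \<Longrightarrow> norm (x::'n::finite linf) \<le> c"
  unfolding norm_linf.rep_eq by (rule Max.boundedI) auto

lemma norm_lone_eq: "norm (y::'n::finite lone) = (\<Sum>i\<in>UNIV. \<bar>Rep_lone y i\<bar>)"
  by (simp add: norm_lone.rep_eq)

lemma abs_Rep_lone_le: "\<bar>Rep_lone y i\<bar> \<le> norm (y::'n::finite lone)"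
  unfolding norm_lone_eq by (rule member_le_sum) auto

definition coordL :: "'n::finite \<Rightarrow> 'n linf \<Rightarrow>\<^sub>L real" where
  "coordL i = Blinfun (\<lambda>z. Rep_linf z i)"

lemma bl_coord: "bounded_linear (\<lambda>z::'n::finite linf. Rep_linf z i)"
  by (rule bounded_linear_intro[where K=1])
     (auto simp: plus_linf.rep_eq scaleR_linf.rep_eq abs_Rep_linf_le)

lemma coordL_apply[simp]: "blinfun_apply (coordL i) z = Rep_linf z i"
  by (simp add: coordL_def bounded_linear_Blinfun_apply[OF bl_coord])

lemma norm_coordL: "norm (coordL i) \<le> 1"
  by (rule norm_blinfun_bound) (auto simp: abs_Rep_linf_le)

definition deltaL :: "'n::finite \<Rightarrow> 'n linf" where
  "deltaL i = Abs_linf (\<lambda>j. if j = i then 1 else 0)"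

lemma Rep_deltaL[simp]: "Rep_linf (deltaL i) j = (if j = i then 1 else 0)"
  by (simp add: deltaL_def Abs_linf_inverse)

lemma norm_deltaL: "norm (deltaL i) \<le> 1"
  by (rule norm_linf_le) auto

definition row_op :: "'n::finite \<Rightarrow> ('a::real_normed_vector \<Rightarrow>\<^sub>L real) \<Rightarrow> ('a \<Rightarrow>\<^sub>L 'n linf)" where
  "row_op i g = Blinfun (\<lambda>x. blinfun_apply g x *\<^sub>R deltaL i)"

lemma row_op_apply[simp]: "blinfun_apply (row_op i g) x = blinfun_apply g x *\<^sub>R deltaL i"
proof -
  have "bounded_linear (\<lambda>x. blinfun_apply g x *\<^sub>R deltaL i)"
    by (rule bounded_linear_compose[OF bounded_linear_scaleR_left blinfun.bounded_linear_right])
  then show ?thesis by (simp add: row_op_def bounded_linear_Blinfun_apply)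
qed

lemma bl_row_op: "bounded_linear (row_op i)"
proof (rule bounded_linear_intro[where K=1])
  fix g h :: "'a::real_normed_vector \<Rightarrow>\<^sub>L real"
  show "row_op i (g + h) = row_op i g + row_op i h"
    by (rule blinfun_eqI) (simp add: blinfun.add_left scaleR_add_left)
  fix r :: real
  show "row_op i (r *\<^sub>R g) = r *\<^sub>R row_op i g"
    by (rule blinfun_eqI) (simp add: blinfun.scaleR_left)
next
  fix g :: "'a::real_normed_vector \<Rightarrow>\<^sub>L real"
  show "norm (row_op i g) \<le> norm g * 1"
  proof (simp, rule norm_blinfun_bound)
    fix x
    have "norm (blinfun_apply g x *\<^sub>R deltaL i) \<le> \<bar>blinfun_apply g x\<bar> * 1"
      using norm_deltaL[of i] by (simp add: mult_left_le)
    also have "\<dots> \<le> norm g * norm x" using norm_blinfun[of g x] by simp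
    finally show "norm (blinfun_apply (row_op i g) x) \<le> norm g * norm x" by simp
  qed simp
qed

lemma coord_row: "coordL i o\<^sub>L row_op j g = (if i = j then g else 0)"
  by (rule blinfun_eqI) (auto simp: scaleR_linf.rep_eq)

lemma decomp_op: "(A :: 'a::real_normed_vector \<Rightarrow>\<^sub>L 'n::finite linf) = (\<Sum>j\<in>UNIV. row_op j (coordL j o\<^sub>L A))"
proof (rule blinfun_eqI)
  fix x
  show "blinfun_apply A x = blinfun_apply (\<Sum>j\<in>UNIV. row_op j (coordL j o\<^sub>L A)) x"
    unfolding linf_eq_iff
    by (simp add: blinfun.sum_left Rep_linf_sum scaleR_linf.rep_eq)
qed

lemma norm_sum_rows:
  assumes "\<And>j. norm (g j) \<le> 1"
  shows "norm (\<Sum>j\<in>UNIV. row_op j (g j) :: 'a::real_normed_vector \<Rightarrow>\<^sub>L 'n::finite linf) \<le> 1"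
proof (rule norm_blinfun_bound)
  fix x
  show "norm (blinfun_apply (\<Sum>j\<in>UNIV. row_op j (g j)) x) \<le> 1 * norm x"
  proof (rule norm_linf_le)
    fix i
    have "Rep_linf (blinfun_apply (\<Sum>j\<in>UNIV. row_op j (g j)) x) i = blinfun_apply (g i) x"
      by (simp add: blinfun.sum_left Rep_linf_sum scaleR_linf.rep_eq)
    also have "\<bar>\<dots>\<bar> \<le> norm (g i) * norm x" using norm_blinfun[of "g i" x] by simp
    also have "\<dots> \<le> 1 * norm x" using assms[of i] by (simp add: mult_left_le_one_le)
    finally show "\<bar>Rep_linf (blinfun_apply (\<Sum>j\<in>UNIV. row_op j (g j)) x) i\<bar> \<le> 1 * norm x" .
  qed
qed simp



lemma sum_delta_l[simp]: "(\<Sum>j\<in>(UNIV::'n::finite set). (if j = i then 1 else 0) * f j) = (f i::real)"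
  using sum_delta_r'[of f i] by (simp add: mult.commute)

lemma Rep_unit_vec[simp]: "Rep_lone (unit_vec i) j = (if j = i then 1 else 0)"
  by (simp add: unit_vec.rep_eq)

lemma pairing_unit[simp]: "pairing (unit_vec i) z = Rep_linf z i"
  by (simp add: pairing.rep_eq)

lemma pairing_bound: "\<bar>pairing y z\<bar> \<le> norm y * norm z"
proof -
  have "\<bar>pairing y z\<bar> \<le> (\<Sum>i\<in>UNIV. \<bar>Rep_lone y i * Rep_linf z i\<bar>)"
    unfolding pairing.rep_eq by (rule sum_abs)
  also have "\<dots> \<le> (\<Sum>i\<in>UNIV. \<bar>Rep_lone y i\<bar> * norm z)"
    by (rule sum_mono) (simp add: abs_mult abs_Rep_linf_le mult_left_mono)
  also have "\<dots> = norm y * norm z" by (simp add: norm_lone_eq sum_distrib_right)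
  finally show ?thesis .
qed

lemma bl_pairing: "bounded_linear (pairing y)"
proof (rule bounded_linear_intro[where K="norm y"])
  fix z
  show "norm (pairing y z) \<le> norm z * norm y" using pairing_bound[of y z] by (simp add: mult.commute)
qed (auto simp: pairing.rep_eq plus_linf.rep_eq scaleR_linf.rep_eq sum.distrib sum_distrib_left
        ring_distribs mult.commute mult.left_commute)

lemma pairing_add_left: "pairing (y1 + y2) z = pairing y1 z + pairing y2 z"
  by (simp add: pairing.rep_eq plus_lone.rep_eq sum.distrib ring_distribs)

lemma pairing_scale_left: "pairing (r *\<^sub>R y) z = r * pairing y z"
  by (simp add: pairing.rep_eq scaleR_lone.rep_eq sum_distrib_left mult.assoc)

lemma bl_inner_adj: "bounded_linear (\<lambda>x. pairing y (blinfun_apply T x))"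
  by (rule bounded_linear_compose[OF bl_pairing blinfun.bounded_linear_right])

lemma inner_adj_apply: "blinfun_apply (Blinfun (\<lambda>x. pairing y (blinfun_apply T x))) = (\<lambda>x. pairing y (blinfun_apply T x))"
  by (rule bounded_linear_Blinfun_apply[OF bl_inner_adj])

lemma norm_inner_adj: "norm (Blinfun (\<lambda>x. pairing y (blinfun_apply T x))) \<le> norm y * norm T"
proof (rule norm_blinfun_bound)
  fix x
  have "\<bar>pairing y (blinfun_apply T x)\<bar> \<le> norm y * norm (blinfun_apply T x)" by (rule pairing_bound)
  also have "\<dots> \<le> norm y * (norm T * norm x)" by (rule mult_left_mono) (auto simp: norm_blinfun)
  finally show "norm (blinfun_apply (Blinfun (\<lambda>x. pairing y (blinfun_apply T x))) x) \<le> norm y * norm T * norm x"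
    by (simp add: inner_adj_apply mult.assoc)
qed simp

lemma bl_adj: "bounded_linear (\<lambda>y. Blinfun (\<lambda>x. pairing y (blinfun_apply T x)))"
proof (rule bounded_linear_intro[where K="norm T"])
  fix y1 y2
  show "Blinfun (\<lambda>x. pairing (y1 + y2) (blinfun_apply T x)) =
    Blinfun (\<lambda>x. pairing y1 (blinfun_apply T x)) + Blinfun (\<lambda>x. pairing y2 (blinfun_apply T x))"
    by (rule blinfun_eqI) (simp add: inner_adj_apply[of "y1+y2", unfolded pairing_add_left] inner_adj_apply blinfun.add_left pairing_add_left)
next
  fix r y
  show "Blinfun (\<lambda>x. pairing (r *\<^sub>R y) (blinfun_apply T x)) = r *\<^sub>R Blinfun (\<lambda>x. pairing y (blinfun_apply T x))"
    by (rule blinfun_eqI) (simp add: inner_adj_apply[of "r *\<^sub>R y", unfolded pairing_scale_left] inner_adj_apply blinfun.scaleR_left pairing_scale_left)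
next
  fix y
  show "norm (Blinfun (\<lambda>x. pairing y (blinfun_apply T x))) \<le> norm y * norm T" by (rule norm_inner_adj)
qed

lemma adj_apply: "blinfun_apply (adjoint_op T) y = Blinfun (\<lambda>x. pairing y (blinfun_apply T x))"
  by (simp add: adjoint_op_def bounded_linear_Blinfun_apply[OF bl_adj])

lemma adj_apply2[simp]: "blinfun_apply (blinfun_apply (adjoint_op T) y) x = pairing y (blinfun_apply T x)"
  by (simp add: adj_apply inner_adj_apply)

lemma adj_unit: "blinfun_apply (adjoint_op T) (unit_vec i) = coordL i o\<^sub>L T"
  by (rule blinfun_eqI) simp

lemma norm_adj_le: "norm (blinfun_apply (adjoint_op T) y) \<le> norm y * norm T"
  using norm_inner_adj by (simp add: adj_apply)

lemma norm_row_le: "norm (coordL i o\<^sub>L T) \<le> norm T"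
proof -
  have "norm (coordL i o\<^sub>L T) \<le> norm (coordL i) * norm T" by (rule norm_blinfun_compose)
  also have "\<dots> \<le> 1 * norm T" by (rule mult_right_mono[OF norm_coordL]) simp
  finally show ?thesis by simp
qed

lemma exists_row_norm:
  fixes T :: "'a::real_normed_vector \<Rightarrow>\<^sub>L 'n::finite linf"
  shows "\<exists>i. norm (coordL i o\<^sub>L T) = norm T"
proof -
  define c where "c = Max (range (\<lambda>i. norm (coordL i o\<^sub>L T)))"
  have "c \<in> range (\<lambda>i. norm (coordL i o\<^sub>L T))" unfolding c_def by (rule Max_in) auto
  then obtain i where i: "norm (coordL i o\<^sub>L T) = c" by auto
  have c0: "0 \<le> c" using i by (metis norm_ge_zero)
  have "norm T \<le> c"
  proof (rule norm_blinfun_bound[OF c0])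
    fix x
    show "norm (blinfun_apply T x) \<le> c * norm x"
    proof (rule norm_linf_le)
      fix j
      have "\<bar>Rep_linf (blinfun_apply T x) j\<bar> = norm (blinfun_apply (coordL j o\<^sub>L T) x)" by simp
      also have "\<dots> \<le> norm (coordL j o\<^sub>L T) * norm x" by (rule norm_blinfun)
      also have "\<dots> \<le> c * norm x" by (rule mult_right_mono) (auto simp: c_def)
      finally show "\<bar>Rep_linf (blinfun_apply T x) j\<bar> \<le> c * norm x" .
    qed
  qed
  then show ?thesis using i norm_row_le[of i T] by auto
qed



lemma norm_unit_vec[simp]: "norm (unit_vec i :: 'n::finite lone) = 1"
  by (simp add: norm_lone_eq)

lemma one_coord:
  fixes a :: "'n::finite lone"
  assumes "norm a \<le> 1" "\<bar>Rep_lone a i\<bar> = 1" "j \<noteq> i"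
  shows "Rep_lone a j = 0"
proof -
  have "(\<Sum>k\<in>{i,j}. \<bar>Rep_lone a k\<bar>) \<le> (\<Sum>k\<in>UNIV. \<bar>Rep_lone a k\<bar>)"
    by (rule sum_mono2) auto
  then have "\<bar>Rep_lone a i\<bar> + \<bar>Rep_lone a j\<bar> \<le> 1" using assms by (simp add: norm_lone_eq)
  then show ?thesis using assms by simp
qed

lemma ext_unit:
  fixes y :: "'n::finite lone"
  assumes s: "s \<in> {-1, 1}" and y: "y = s *\<^sub>R unit_vec i"
  shows "y extreme_point_of cball 0 1"
  unfolding extreme_point_of_def
proof (intro conjI ballI)
  show "y \<in> cball 0 1" using s y by auto
  fix a b assume a: "a \<in> cball (0::'n lone) 1" and b: "b \<in> cball (0::'n lone) 1"
  have na: "norm a \<le> 1" and nb: "norm b \<le> 1" using a b by auto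
  show "y \<notin> open_segment a b"
  proof
    assume "y \<in> open_segment a b"
    then obtain u where ab: "a \<noteq> b" and u: "0 < u" "u < 1" and yu: "y = (1 - u) *\<^sub>R a + u *\<^sub>R b"
      unfolding in_segment by auto
    define p where "p = s * Rep_lone a i"
    define q where "q = s * Rep_lone b i"
    have ss: "s * s = 1" using s by auto
    have "Rep_lone y i = (1 - u) * Rep_lone a i + u * Rep_lone b i"
      using yu by (simp add: plus_lone.rep_eq scaleR_lone.rep_eq)
    then have "s = (1 - u) * Rep_lone a i + u * Rep_lone b i" using y by (simp add: scaleR_lone.rep_eq)
    then have "s * s = s * ((1 - u) * Rep_lone a i + u * Rep_lone b i)" by (rule arg_cong[where f="\<lambda>t. s * t"])
    also have "\<dots> = (1 - u) * p + u * q" by (simp add: p_def q_def algebra_simps)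
    finally have "s * s = (1 - u) * p + u * q" .
    then have eq: "(1 - u) * (1 - p) + u * (1 - q) = 0" using ss by (simp add: algebra_simps)
    have "p \<le> 1" unfolding p_def using s abs_Rep_lone_le[of a i] na by (auto simp: abs_le_iff)
    have "q \<le> 1" unfolding q_def using s abs_Rep_lone_le[of b i] nb by (auto simp: abs_le_iff)
    have t1: "(1 - u) * (1 - p) \<ge> 0" using \<open>p \<le> 1\<close> u by simp
    have t2: "u * (1 - q) \<ge> 0" using \<open>q \<le> 1\<close> u by simp
    have "(1 - u) * (1 - p) = 0" using eq t1 t2 by linarith
    then have p1: "p = 1" using u by simp
    have "u * (1 - q) = 0" using eq t1 t2 by linarith
    then have q1: "q = 1" using u by simp
    have ai: "Rep_lone a i = s" using p1 s unfolding p_def by auto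
    have bi: "Rep_lone b i = s" using q1 s unfolding q_def by auto
    have "a = s *\<^sub>R unit_vec i"
      unfolding lone_eq_iff
    proof
      fix j show "Rep_lone a j = Rep_lone (s *\<^sub>R unit_vec i) j"
        using one_coord[OF na, of i j] ai s by (cases "j = i") (auto simp: scaleR_lone.rep_eq)
    qed
    moreover have "b = s *\<^sub>R unit_vec i"
      unfolding lone_eq_iff
    proof
      fix j show "Rep_lone b j = Rep_lone (s *\<^sub>R unit_vec i) j"
        using one_coord[OF nb, of i j] bi s by (cases "j = i") (auto simp: scaleR_lone.rep_eq)
    qed
    ultimately show False using ab by simp
  qed
qed

lemma ext_coord_one:
  fixes y :: "'n::finite lone"
  assumes ext: "y extreme_point_of cball 0 1" and nz: "Rep_lone y j \<noteq> 0"
  shows "\<bar>Rep_lone y j\<bar> = 1"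
proof (rule ccontr)
  assume ne: "\<bar>Rep_lone y j\<bar> \<noteq> 1"
  have ny: "norm y \<le> 1" using ext unfolding extreme_point_of_def by auto
  define c where "c = \<bar>Rep_lone y j\<bar>"
  have c0: "0 < c" using nz unfolding c_def by simp
  have c1: "c < 1" using ne abs_Rep_lone_le[of y j] ny unfolding c_def by linarith
  define a where "a = sgn (Rep_lone y j) *\<^sub>R unit_vec j"
  define z where "z = (1 / (1 - c)) *\<^sub>R (y - Rep_lone y j *\<^sub>R unit_vec j)"
  have sc: "c * sgn (Rep_lone y j) = Rep_lone y j" unfolding c_def by (metis abs_mult_sgn mult.commute sgn_mult_abs)
  have decomp: "y = (1 - c) *\<^sub>R z + c *\<^sub>R a"
    unfolding lone_eq_iff
  proof
    fix k
    show "Rep_lone y k = Rep_lone ((1 - c) *\<^sub>R z + c *\<^sub>R a) k"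
      using c1 sc by (auto simp: z_def a_def plus_lone.rep_eq scaleR_lone.rep_eq minus_lone.rep_eq)
  qed
  have na: "norm a = 1" using nz by (simp add: a_def)
  have pt: "\<bar>Rep_lone (y - Rep_lone y j *\<^sub>R unit_vec j) k\<bar> = \<bar>Rep_lone y k\<bar> - (if k = j then c else 0)" for k
    by (auto simp: minus_lone.rep_eq scaleR_lone.rep_eq c_def)
  have "norm (y - Rep_lone y j *\<^sub>R unit_vec j) = norm y - c"
    unfolding norm_lone_eq pt by (simp add: sum_subtractf)
  then have nz': "norm z = (norm y - c) / (1 - c)" using c1 by (simp add: z_def)
  have "norm z \<le> 1" unfolding nz' using c1 ny by (simp add: divide_le_eq_1)
  have zj: "Rep_lone z j = 0" by (simp add: z_def scaleR_lone.rep_eq minus_lone.rep_eq)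
  have aj: "Rep_lone a j \<noteq> 0" using nz by (simp add: a_def scaleR_lone.rep_eq sgn_if)
  have "z \<noteq> a" using zj aj by auto
  then have "y \<in> open_segment z a" unfolding in_segment using decomp c0 c1 by auto
  moreover have "z \<in> cball 0 1" "a \<in> cball 0 1" using \<open>norm z \<le> 1\<close> na by auto
  ultimately show False using ext unfolding extreme_point_of_def by blast
qed

lemma ext_nonzero:
  assumes ext: "(y::'n::finite lone) extreme_point_of cball 0 1"
  shows "y \<noteq> 0"
proof
  assume y0: "y = 0"
  define e where "e = (unit_vec undefined :: 'n lone)"
  have "e \<noteq> - e" unfolding e_def lone_eq_iff by (auto simp: uminus_lone.rep_eq intro!: exI[of _ undefined])
  moreover have "(0::'n lone) = (1 - 1/2) *\<^sub>R e + (1/2) *\<^sub>R (- e)" by simp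
  ultimately have "y \<in> open_segment e (- e)" unfolding in_segment y0
    by (intro conjI exI[of _ "1/2"]) auto
  moreover have "e \<in> cball 0 1" "- e \<in> cball 0 1" by (auto simp: e_def)
  ultimately show False using ext unfolding extreme_point_of_def by blast
qed

lemma ext_lone:
  "(y::'n::finite lone) extreme_point_of cball 0 1 \<longleftrightarrow> (\<exists>s i. s \<in> {-1, 1} \<and> y = s *\<^sub>R unit_vec i)"
proof
  assume ext: "y extreme_point_of cball 0 1"
  have ny: "norm y \<le> 1" using ext unfolding extreme_point_of_def by auto
  obtain j where j: "Rep_lone y j \<noteq> 0"
    using ext_nonzero[OF ext] unfolding lone_eq_iff by (auto simp: zero_lone.rep_eq)
  have j1: "\<bar>Rep_lone y j\<bar> = 1" by (rule ext_coord_one[OF ext j])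
  have "y = Rep_lone y j *\<^sub>R unit_vec j"
    unfolding lone_eq_iff
  proof
    fix k show "Rep_lone y k = Rep_lone (Rep_lone y j *\<^sub>R unit_vec j) k"
      using one_coord[OF ny j1, of k] by (cases "k = j") (auto simp: scaleR_lone.rep_eq)
  qed
  moreover have "Rep_lone y j \<in> {-1, 1}" using j1 by (auto simp: abs_if split: if_splits)
  ultimately show "\<exists>s i. s \<in> {-1, 1} \<and> y = s *\<^sub>R unit_vec i" by blast
next
  assume "\<exists>s i. s \<in> {-1, 1} \<and> y = s *\<^sub>R unit_vec i"
  then show "y extreme_point_of cball 0 1" using ext_unit by blast
qed



lemma fin_dual:
  fixes B :: "'v::real_normed_vector set"
  assumes finB: "finite B" and spB: "span B = UNIV"
  shows "\<exists>C. finite C \<and> span C = (UNIV :: ('v \<Rightarrow>\<^sub>L real) set)"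
proof -
  obtain B0 where B0: "B0 \<subseteq> B" "independent B0" "B \<subseteq> span B0"
    by (rule maximal_independent_subset[of B])
  have finB0: "finite B0" using B0 finB finite_subset by blast
  have "span B \<subseteq> span B0" using span_mono[OF B0(3)] by (simp add: real_vector.span_span)
  then have spB0: "span B0 = UNIV" using spB by auto
  define R where "R g = (\<Sum>b\<in>B0. blinfun_apply g b *\<^sub>R b)" for g :: "'v \<Rightarrow>\<^sub>L real"
  have linR: "linear R"
    by (rule linearI)
       (simp_all add: R_def blinfun.add_left blinfun.scaleR_left scaleR_add_left sum.distrib scaleR_sum_right)
  have R0: "g = 0" if "R g = 0" for g
  proof -
    have nd: "\<not> (\<exists>u. (\<exists>v\<in>B0. u v \<noteq> 0) \<and> (\<Sum>v\<in>B0. u v *\<^sub>R v) = 0)"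
      using B0(2) dependent_finite[OF finB0] by simp
    have "\<forall>b\<in>B0. blinfun_apply g b = 0"
    proof (rule ccontr)
      assume "\<not> (\<forall>b\<in>B0. blinfun_apply g b = 0)"
      then have "(\<exists>v\<in>B0. blinfun_apply g v \<noteq> 0) \<and> (\<Sum>v\<in>B0. blinfun_apply g v *\<^sub>R v) = 0"
        using that unfolding R_def by auto
      then have "\<exists>u. (\<exists>v\<in>B0. u v \<noteq> 0) \<and> (\<Sum>v\<in>B0. u v *\<^sub>R v) = 0"
        by (rule exI[of _ "\<lambda>b. blinfun_apply g b"])
      with nd show False by (rule notE)
    qed
    then have "blinfun_apply g x = 0" for x
      using real_vector.linear_eq_0_on_span[OF bounded_linear.linear[OF blinfun.bounded_linear_right], of B0 g x] spB0
      by auto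
    then show "g = 0" by (intro blinfun_eqI) simp
  qed
  have injR: "inj R"
  proof (rule injI)
    fix g h assume "R g = R h"
    then have "R (g - h) = 0" using linear_diff[OF linR] by simp
    then show "g = h" using R0[of "g - h"] by simp
  qed
  obtain C where C: "independent C" "(UNIV :: ('v \<Rightarrow>\<^sub>L real) set) \<subseteq> span C"
    by (rule maximal_independent_subset[of UNIV]) auto
  have "independent (R ` C)"
    by (rule linear_independent_injective_image[OF linR C(1)]) (use injR in \<open>auto simp: inj_on_def\<close>)
  then have "finite (R ` C)"
    using independent_span_bound[OF finB, of "R ` C"] spB by auto
  then have "finite C" using injR by (simp add: finite_image_iff inj_on_subset)
  then show ?thesis using C by auto
qed



lemma approx_norm:
  fixes L :: "'v::real_normed_vector \<Rightarrow>\<^sub>L real"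
  assumes e: "e > 0"
  shows "\<exists>g. norm g \<le> 1 \<and> blinfun_apply L g \<ge> norm L - e"
proof (cases "norm L \<le> e")
  case True
  then show ?thesis by (intro exI[of _ 0]) simp
next
  case False
  show ?thesis
  proof (rule ccontr)
    assume "\<not> ?thesis"
    then have H: "norm g \<le> 1 \<Longrightarrow> blinfun_apply L g < norm L - e" for g by auto
    have "norm L \<le> norm L - e"
    proof (rule norm_blinfun_bound)
      show "0 \<le> norm L - e" using False by simp
      fix x :: 'v
      show "norm (blinfun_apply L x) \<le> (norm L - e) * norm x"
      proof (cases "x = 0")
        case True then show ?thesis by simp
      next
        case x0: False
        define g where "g = x /\<^sub>R norm x"
        have ng: "norm g \<le> 1" "norm (- g) \<le> 1" using x0 by (auto simp: g_def)
        have Lg: "blinfun_apply L g = blinfun_apply L x / norm x"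
          by (simp add: g_def blinfun.scaleR_right divide_inverse mult.commute)
        have "\<bar>blinfun_apply L g\<bar> < norm L - e"
          using H[OF ng(1)] H[OF ng(2)] by (simp add: blinfun.minus_right)
        then have "\<bar>blinfun_apply L x\<bar> / norm x < norm L - e" using Lg by (simp add: abs_divide)
        then show ?thesis using x0 by (simp add: divide_less_eq less_imp_le)
      qed
    qed
    then show False using e by simp
  qed
qed

definition Cmap :: "'n::finite \<Rightarrow> ('a::real_normed_vector \<Rightarrow>\<^sub>L 'n linf) \<Rightarrow>\<^sub>L ('a \<Rightarrow>\<^sub>L real)" where
  "Cmap i = Blinfun (\<lambda>A. coordL i o\<^sub>L A)"

lemma Cmap_apply[simp]: "blinfun_apply (Cmap i) A = coordL i o\<^sub>L A"
  by (simp add: Cmap_def bounded_linear_Blinfun_apply[OF bounded_bilinear.bounded_linear_right[OF bounded_bilinear_blinfun_compose]])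

definition Rmap :: "'n::finite \<Rightarrow> ('a::real_normed_vector \<Rightarrow>\<^sub>L real) \<Rightarrow>\<^sub>L ('a \<Rightarrow>\<^sub>L 'n linf)" where
  "Rmap j = Blinfun (row_op j)"

lemma Rmap_apply[simp]: "blinfun_apply (Rmap j) g = row_op j g"
  by (simp add: Rmap_def bounded_linear_Blinfun_apply[OF bl_row_op])

definition iota :: "'n::finite \<Rightarrow> (('a::real_normed_vector \<Rightarrow>\<^sub>L real) \<Rightarrow>\<^sub>L real) \<Rightarrow> (('a \<Rightarrow>\<^sub>L 'n linf) \<Rightarrow>\<^sub>L real)" where
  "iota i \<phi> = \<phi> o\<^sub>L Cmap i"

definition proj :: "'n::finite \<Rightarrow> (('a::real_normed_vector \<Rightarrow>\<^sub>L 'n linf) \<Rightarrow>\<^sub>L real) \<Rightarrow> (('a \<Rightarrow>\<^sub>L real) \<Rightarrow>\<^sub>L real)" where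
  "proj j \<Psi> = \<Psi> o\<^sub>L Rmap j"

lemma iota_apply[simp]: "blinfun_apply (iota i \<phi>) A = blinfun_apply \<phi> (coordL i o\<^sub>L A)"
  by (simp add: iota_def)

lemma proj_apply[simp]: "blinfun_apply (proj j \<Psi>) g = blinfun_apply \<Psi> (row_op j g)"
  by (simp add: proj_def)

lemma linear_iota: "linear (iota i)"
  unfolding iota_def
  by (rule bounded_linear.linear[OF bounded_bilinear.bounded_linear_left[OF bounded_bilinear_blinfun_compose]])

lemma linear_proj: "linear (proj j)"
  unfolding proj_def
  by (rule bounded_linear.linear[OF bounded_bilinear.bounded_linear_left[OF bounded_bilinear_blinfun_compose]])

lemma proj_iota: "proj j (iota i \<phi>) = (if i = j then \<phi> else 0)"
  by (rule blinfun_eqI) (auto simp: coord_row blinfun.zero_right)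

lemma decomp_fun: "\<Psi> = (\<Sum>j\<in>UNIV. iota j (proj j \<Psi>))"
proof (rule blinfun_eqI)
  fix A
  have "blinfun_apply \<Psi> A = blinfun_apply \<Psi> (\<Sum>j\<in>UNIV. row_op j (coordL j o\<^sub>L A))"
    using decomp_op[of A] by simp
  also have "\<dots> = (\<Sum>j\<in>UNIV. blinfun_apply \<Psi> (row_op j (coordL j o\<^sub>L A)))"
    by (simp add: blinfun.sum_right)
  finally show "blinfun_apply \<Psi> A = blinfun_apply (\<Sum>j\<in>UNIV. iota j (proj j \<Psi>)) A"
    by (simp add: blinfun.sum_left)
qed

lemma norm_Cmap: "norm (Cmap i) \<le> 1"
  by (rule norm_blinfun_bound) (auto simp: norm_row_le)

lemma norm_iota:
  fixes \<phi> :: "('a::real_normed_vector \<Rightarrow>\<^sub>L real) \<Rightarrow>\<^sub>L real" and i :: "'n::finite"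
  shows "norm (iota i \<phi>) \<le> norm \<phi>"
proof -
  have "norm (iota i \<phi>) \<le> norm \<phi> * norm (Cmap i :: ('a \<Rightarrow>\<^sub>L 'n linf) \<Rightarrow>\<^sub>L ('a \<Rightarrow>\<^sub>L real))" unfolding iota_def by (metis norm_blinfun_compose)
  also have "\<dots> \<le> norm \<phi> * 1" by (rule mult_left_mono[OF norm_Cmap]) simp
  finally show ?thesis by simp
qed

lemma iota_J:
  assumes T1: "norm T = 1" and phi: "\<phi> \<in> Jset (coordL i o\<^sub>L T)"
  shows "iota i \<phi> \<in> Jset T"
proof -
  have v: "blinfun_apply (iota i \<phi>) T = 1" using phi by (simp add: Jset_def)
  have "norm (iota i \<phi>) \<le> 1" using norm_iota[of i \<phi>] phi by (simp add: Jset_def)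
  moreover have "1 \<le> norm (iota i \<phi>)"
    using norm_blinfun[of "iota i \<phi>" T] v T1 by simp
  ultimately show ?thesis using v by (simp add: Jset_def)
qed



lemma proj_in_span:
  fixes T :: "'a::real_normed_vector \<Rightarrow>\<^sub>L 'n::finite linf"
  assumes T1: "norm T = 1" and Psi: "\<Psi> \<in> Jset T"
  shows "proj j \<Psi> \<in> span (Jset (coordL j o\<^sub>L T))"
proof -
  define \<phi> where "\<phi> i = proj i \<Psi>" for i
  have nPsi: "norm \<Psi> = 1" and vPsi: "blinfun_apply \<Psi> T = 1" using Psi by (auto simp: Jset_def)
  have sumle: "(\<Sum>i\<in>UNIV. norm (\<phi> i)) \<le> 1"
  proof (rule field_le_epsilon)
    fix e :: real assume e: "0 < e"
    define e' where "e' = e / real CARD('n)"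
    have e': "0 < e'" using e by (simp add: e'_def)
    have "\<forall>i. \<exists>g. norm g \<le> 1 \<and> blinfun_apply (\<phi> i) g \<ge> norm (\<phi> i) - e'"
      using approx_norm[OF e'] by blast
    then obtain g where g: "\<And>i. norm (g i) \<le> 1" "\<And>i. blinfun_apply (\<phi> i) (g i) \<ge> norm (\<phi> i) - e'"
      by metis
    have "(\<Sum>i\<in>UNIV. norm (\<phi> i)) \<le> (\<Sum>i\<in>UNIV. blinfun_apply (\<phi> i) (g i) + e')"
      by (rule sum_mono) (use g(2) in \<open>auto simp: algebra_simps\<close>)
    also have "\<dots> = (\<Sum>i\<in>UNIV. blinfun_apply (\<phi> i) (g i)) + e"
      by (simp add: sum.distrib e'_def)
    also have "(\<Sum>i\<in>UNIV. blinfun_apply (\<phi> i) (g i)) = blinfun_apply \<Psi> (\<Sum>i\<in>UNIV. row_op i (g i))"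
      by (simp add: \<phi>_def blinfun.sum_right)
    also have "\<dots> \<le> norm \<Psi> * norm (\<Sum>i\<in>UNIV. row_op i (g i) :: 'a \<Rightarrow>\<^sub>L 'n linf)"
      using norm_blinfun[of \<Psi> "\<Sum>i\<in>UNIV. row_op i (g i)"] by simp
    also have "\<dots> \<le> 1" using norm_sum_rows[of g, OF g(1)] nPsi by simp
    finally show "(\<Sum>i\<in>UNIV. norm (\<phi> i)) \<le> 1 + e" by simp
  qed
  have "1 = blinfun_apply \<Psi> (\<Sum>i\<in>UNIV. row_op i (coordL i o\<^sub>L T))"
    using vPsi decomp_op[of T] by simp
  also have "\<dots> = (\<Sum>i\<in>UNIV. blinfun_apply (\<phi> i) (coordL i o\<^sub>L T))"
    by (simp add: \<phi>_def blinfun.sum_right)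
  finally have sum1: "(\<Sum>i\<in>UNIV. blinfun_apply (\<phi> i) (coordL i o\<^sub>L T)) = 1" by simp
  have le: "blinfun_apply (\<phi> i) (coordL i o\<^sub>L T) \<le> norm (\<phi> i)" for i
  proof -
    have "blinfun_apply (\<phi> i) (coordL i o\<^sub>L T) \<le> norm (\<phi> i) * norm (coordL i o\<^sub>L T)"
      using norm_blinfun[of "\<phi> i" "coordL i o\<^sub>L T"] by simp
    also have "\<dots> \<le> norm (\<phi> i) * 1"
      by (rule mult_left_mono) (use norm_row_le[of i T] T1 in auto)
    finally show ?thesis by simp
  qed
  have "(\<Sum>i\<in>UNIV. norm (\<phi> i) - blinfun_apply (\<phi> i) (coordL i o\<^sub>L T)) = 0"
  proof -
    have "(\<Sum>i\<in>UNIV. norm (\<phi> i) - blinfun_apply (\<phi> i) (coordL i o\<^sub>L T)) \<le> 0"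
      using sumle sum1 by (simp add: sum_subtractf)
    moreover have "(\<Sum>i\<in>UNIV. norm (\<phi> i) - blinfun_apply (\<phi> i) (coordL i o\<^sub>L T)) \<ge> 0"
      by (rule sum_nonneg) (use le in auto)
    ultimately show ?thesis by simp
  qed
  then have eqj: "blinfun_apply (\<phi> j) (coordL j o\<^sub>L T) = norm (\<phi> j)"
    using sum_nonneg_eq_0_iff[of UNIV "\<lambda>i. norm (\<phi> i) - blinfun_apply (\<phi> i) (coordL i o\<^sub>L T)"] le
    by simp
  show ?thesis
  proof (cases "\<phi> j = 0")
    case True then show ?thesis by (simp add: \<phi>_def span_zero)
  next
    case False
    then have n0: "norm (\<phi> j) \<noteq> 0" by simp
    have "(1 / norm (\<phi> j)) *\<^sub>R \<phi> j \<in> Jset (coordL j o\<^sub>L T)"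
      using n0 eqj by (simp add: Jset_def blinfun.scaleR_left)
    then have "norm (\<phi> j) *\<^sub>R ((1 / norm (\<phi> j)) *\<^sub>R \<phi> j) \<in> span (Jset (coordL j o\<^sub>L T))"
      by (intro span_mul span_base)
    then show ?thesis using n0 by (simp add: \<phi>_def)
  qed
qed



lemma dim_J:
  fixes T :: "'a::real_normed_vector \<Rightarrow>\<^sub>L 'n::finite linf"
  assumes fin: "\<exists>B. finite B \<and> span B = (UNIV :: 'a set)" and T1: "norm T = 1"
  shows "dim (Jset T) = (\<Sum>j\<in>UNIV. dim (Jset (coordL j o\<^sub>L T)))"
proof -
  define J where "J j = Jset (coordL j o\<^sub>L T)" for j
  obtain C1 where "finite C1" "span C1 = (UNIV :: ('a \<Rightarrow>\<^sub>L real) set)"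
    using fin fin_dual by blast
  then obtain C2 where finC2: "finite C2" and spC2: "span C2 = (UNIV :: (('a \<Rightarrow>\<^sub>L real) \<Rightarrow>\<^sub>L real) set)"
    using fin_dual by blast
  have "\<forall>j. \<exists>B. B \<subseteq> J j \<and> independent B \<and> J j \<subseteq> span B"
    using maximal_independent_subset by metis
  then obtain Bf where Bf: "\<And>j. Bf j \<subseteq> J j" "\<And>j. independent (Bf j)" "\<And>j. J j \<subseteq> span (Bf j)"
    by metis
  have finBf: "finite (Bf j)" for j
    using independent_span_bound[OF finC2 Bf(2)[of j]] spC2 by auto
  have cardBf: "card (Bf j) = dim (J j)" for j
    by (rule basis_card_eq_dim[OF Bf(1) Bf(3) Bf(2)])
  have inj: "inj (iota j :: (('a \<Rightarrow>\<^sub>L real) \<Rightarrow>\<^sub>L real) \<Rightarrow> _)" for j :: 'n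
    by (rule injI) (metis proj_iota)
  define BB where "BB = (\<Union>j. iota j ` Bf j)"
  have finBB: "finite BB" unfolding BB_def using finBf by auto
  have BBsub: "BB \<subseteq> Jset T"
    unfolding BB_def using Bf(1) iota_J[OF T1] by (auto simp: J_def)
  have spBB: "Jset T \<subseteq> span BB"
  proof
    fix \<Psi> assume Psi: "\<Psi> \<in> Jset T"
    have "iota j (proj j \<Psi>) \<in> span BB" for j
    proof -
      have "proj j \<Psi> \<in> span (J j)" unfolding J_def by (rule proj_in_span[OF T1 Psi])
      also have "span (J j) \<subseteq> span (Bf j)"
        using span_mono[OF Bf(3)[of j]] by (simp add: real_vector.span_span)
      finally have "iota j (proj j \<Psi>) \<in> iota j ` span (Bf j)" by blast
      also have "\<dots> = span (iota j ` Bf j)" by (rule span_linear_image[OF linear_iota, symmetric])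
      also have "\<dots> \<subseteq> span BB" by (rule span_mono) (auto simp: BB_def)
      finally show ?thesis .
    qed
    then have "(\<Sum>j\<in>UNIV. iota j (proj j \<Psi>)) \<in> span BB" by (intro span_sum)
    then show "\<Psi> \<in> span BB" using decomp_fun[of \<Psi>] by simp
  qed
  have zero_notin: "0 \<notin> Bf j" for j using Bf(2)[of j] dependent_zero by blast
  have projBB: "proj j v = 0" if vB: "v \<in> BB" and vn: "v \<notin> iota j ` Bf j" for v j
  proof -
    obtain i b where v: "v = iota i b" "b \<in> Bf i" using vB unfolding BB_def by auto
    then have "i \<noteq> j" using vn by auto
    then show ?thesis using v by (simp add: proj_iota)
  qed
  have indBB: "independent BB"
  proof -
    have "\<not> (\<exists>u. (\<exists>v\<in>BB. u v \<noteq> 0) \<and> (\<Sum>v\<in>BB. u v *\<^sub>R v) = 0)"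
    proof
      assume "\<exists>u. (\<exists>v\<in>BB. u v \<noteq> 0) \<and> (\<Sum>v\<in>BB. u v *\<^sub>R v) = 0"
      then obtain u v0 where v0: "v0 \<in> BB" "u v0 \<noteq> 0" and su: "(\<Sum>v\<in>BB. u v *\<^sub>R v) = 0" by blast
      obtain j b0 where jb: "v0 = iota j b0" "b0 \<in> Bf j" using v0(1) unfolding BB_def by auto
      have "0 = proj j (\<Sum>v\<in>BB. u v *\<^sub>R v)" using su linear_0[OF linear_proj] by simp
      also have "\<dots> = (\<Sum>v\<in>BB. u v *\<^sub>R proj j v)"
        by (simp add: linear_sum[OF linear_proj] linear_scale[OF linear_proj])
      also have "\<dots> = (\<Sum>v\<in>iota j ` Bf j. u v *\<^sub>R proj j v)"
        by (rule sum.mono_neutral_right[OF finBB]) (auto simp: BB_def projBB)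
      also have "\<dots> = (\<Sum>b\<in>Bf j. u (iota j b) *\<^sub>R b)"
        by (subst sum.reindex) (auto simp: inj_on_def proj_iota intro: inj_onD[OF inj])
      finally have s0: "(\<Sum>b\<in>Bf j. u (iota j b) *\<^sub>R b) = 0" by simp
      have "\<not> (\<exists>w. (\<exists>b\<in>Bf j. w b \<noteq> 0) \<and> (\<Sum>b\<in>Bf j. w b *\<^sub>R b) = 0)"
        using Bf(2)[of j] dependent_finite[OF finBf[of j]] by simp
      moreover have "\<exists>w. (\<exists>b\<in>Bf j. w b \<noteq> 0) \<and> (\<Sum>b\<in>Bf j. w b *\<^sub>R b) = 0"
      proof (rule exI[of _ "\<lambda>b. u (iota j b)"], rule conjI)
        show "\<exists>b\<in>Bf j. u (iota j b) \<noteq> 0" using jb v0(2) by blast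
        show "(\<Sum>b\<in>Bf j. u (iota j b) *\<^sub>R b) = 0" by (rule s0)
      qed
      ultimately show False by (rule notE)
    qed
    then show ?thesis using dependent_finite[OF finBB] by simp
  qed
  have "dim (Jset T) = card BB" by (rule basis_card_eq_dim[OF BBsub spBB indBB, symmetric])
  also have "card BB = (\<Sum>j\<in>UNIV. card (iota j ` Bf j))"
    unfolding BB_def
  proof (rule card_UN_disjoint)
    show "\<forall>i\<in>UNIV. \<forall>j\<in>UNIV. i \<noteq> j \<longrightarrow> iota i ` Bf i \<inter> iota j ` Bf j = {}"
    proof (intro ballI impI)
      fix i j :: 'n assume ij: "i \<noteq> j"
      show "iota i ` Bf i \<inter> iota j ` Bf j = {}"
      proof (rule ccontr)
        assume "iota i ` Bf i \<inter> iota j ` Bf j \<noteq> {}"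
        then obtain b b' where b: "b \<in> Bf i" "b' \<in> Bf j" "iota i b = iota j b'" by blast
        have "b = proj i (iota i b)" by (simp add: proj_iota)
        also have "\<dots> = proj i (iota j b')" using b by simp
        also have "\<dots> = 0" using ij by (simp add: proj_iota)
        finally show False using b(1) zero_notin by blast
      qed
    qed
  qed (use finBf in auto)
  also have "\<dots> = (\<Sum>j\<in>UNIV. card (Bf j))"
    by (rule sum.cong) (auto intro!: card_image inj_on_subset[OF inj])
  also have "\<dots> = (\<Sum>j\<in>UNIV. dim (J j))" using cardBf by simp
  finally show ?thesis by (simp add: J_def)
qed



theorem corollary3p8:
  fixes T :: "'a::real_normed_vector \<Rightarrow>\<^sub>L 'n::finite linf" and k :: nat
  assumes "\<exists>B. finite B \<and> span B = (UNIV :: 'a set)"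
    and "norm T = 1"
  shows "k_smooth T k \<longleftrightarrow>
    (\<exists>S :: 'n set. \<exists>m :: 'n \<Rightarrow> nat.
        S \<noteq> {} \<and>
        M_set (adjoint_op T) \<inter> {y. y extreme_point_of cball 0 1}
          = {s *\<^sub>R unit_vec i | s i. s \<in> {-1, 1} \<and> i \<in> S} \<and>
        (\<forall>i\<in>S. k_smooth (blinfun_apply (adjoint_op T) (unit_vec i)) (m i)) \<and>
        (\<Sum>i\<in>S. m i) = k)"
proof -
  note fin = assms(1) and T1 = assms(2)
  define f where "f i = coordL i o\<^sub>L T" for i
  define S0 where "S0 = {i. norm (f i) = 1}"
  have adjf: "blinfun_apply (adjoint_op T) (unit_vec i) = f i" for i
    by (simp add: adj_unit f_def)
  have fle: "norm (f i) \<le> 1" for i using norm_row_le[of i T] T1 by (simp add: f_def)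
  obtain i0 where i0: "norm (f i0) = 1" using exists_row_norm[of T] T1 by (auto simp: f_def)
  have S0ne: "S0 \<noteq> {}" using i0 by (auto simp: S0_def)
  have nA: "norm (adjoint_op T) = 1"
  proof (rule antisym)
    show "norm (adjoint_op T) \<le> 1"
      by (rule norm_blinfun_bound) (use norm_adj_le[of T] T1 in \<open>auto simp: mult.commute\<close>)
    have "norm (blinfun_apply (adjoint_op T) (unit_vec i0)) \<le> norm (adjoint_op T) * norm (unit_vec i0 :: 'n lone)"
      by (rule norm_blinfun)
    then show "1 \<le> norm (adjoint_op T)" using i0 by (simp add: adjf)
  qed
  have adj_s: "norm (blinfun_apply (adjoint_op T) (s *\<^sub>R unit_vec i)) = norm (f i)" if "s \<in> {-1, 1}" for s i
    using that by (auto simp: blinfun.scaleR_right adjf)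
  have MExt: "M_set (adjoint_op T) \<inter> {y. y extreme_point_of cball 0 1}
      = {s *\<^sub>R unit_vec i | s i. s \<in> {-1, 1} \<and> i \<in> S0}"
  proof (rule set_eqI, rule iffI)
    fix y assume "y \<in> M_set (adjoint_op T) \<inter> {y. y extreme_point_of cball 0 1}"
    then have M: "norm (blinfun_apply (adjoint_op T) y) = 1" and E: "y extreme_point_of cball 0 1"
      by (auto simp: M_set_def nA)
    obtain s i where si: "s \<in> {-1, 1}" "y = s *\<^sub>R unit_vec i" using E ext_lone by blast
    have "i \<in> S0" using M adj_s[OF si(1), of i] si(2) by (simp add: S0_def)
    then show "y \<in> {s *\<^sub>R unit_vec i | s i. s \<in> {-1, 1} \<and> i \<in> S0}" using si by blast
  next
    fix y assume "y \<in> {s *\<^sub>R unit_vec i | s i. s \<in> {-1, 1} \<and> i \<in> S0}"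
    then obtain s i where si: "s \<in> {-1, 1}" "y = s *\<^sub>R unit_vec i" "i \<in> S0" by blast
    have E: "y extreme_point_of cball 0 1" using ext_lone si by blast
    have "norm y = 1" using si by auto
    moreover have "norm (blinfun_apply (adjoint_op T) y) = norm (adjoint_op T)"
      using adj_s[OF si(1), of i] si nA by (simp add: S0_def)
    ultimately show "y \<in> M_set (adjoint_op T) \<inter> {y. y extreme_point_of cball 0 1}"
      using E by (simp add: M_set_def)
  qed
  have Jempty: "Jset (f i) = {}" if "i \<notin> S0" for i
  proof (rule ccontr)
    assume "Jset (f i) \<noteq> {}"
    then obtain \<phi> where phi: "norm \<phi> = 1" "blinfun_apply \<phi> (f i) = (1::real)" by (auto simp: Jset_def)
    have "1 \<le> norm \<phi> * norm (f i)" using norm_blinfun[of \<phi> "f i"] phi by simp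
    then show False using phi that fle[of i] by (simp add: S0_def)
  qed
  have dim0: "dim ({} :: (('a \<Rightarrow>\<^sub>L real) \<Rightarrow>\<^sub>L real) set) = 0"
    using basis_card_eq_dim[of "{}" "{} :: (('a \<Rightarrow>\<^sub>L real) \<Rightarrow>\<^sub>L real) set"] by (simp add: real_vector.independent_empty)
  have dimJ: "dim (Jset T) = (\<Sum>i\<in>S0. dim (Jset (f i)))"
  proof -
    have "dim (Jset T) = (\<Sum>i\<in>UNIV. dim (Jset (f i)))" using dim_J[OF fin T1] by (simp add: f_def)
    also have "\<dots> = (\<Sum>i\<in>S0. dim (Jset (f i)))"
      by (rule sum.mono_neutral_right) (auto simp: Jempty dim0)
    finally show ?thesis .
  qed
  have unit_eq: "i = j" if "s *\<^sub>R unit_vec i = s' *\<^sub>R (unit_vec j :: 'n lone)" "s \<in> {-1, 1}" for s s' i j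
  proof -
    have "Rep_lone (s *\<^sub>R unit_vec i) i = Rep_lone (s' *\<^sub>R (unit_vec j :: 'n lone)) i" using that(1) by simp
    then show ?thesis using that(2) by (auto simp: scaleR_lone.rep_eq split: if_splits)
  qed
  show ?thesis
  proof
    assume ks: "k_smooth T k"
    show "\<exists>S m. S \<noteq> {} \<and>
        M_set (adjoint_op T) \<inter> {y. y extreme_point_of cball 0 1}
          = {s *\<^sub>R unit_vec i | s i. s \<in> {-1, 1} \<and> i \<in> S} \<and>
        (\<forall>i\<in>S. k_smooth (blinfun_apply (adjoint_op T) (unit_vec i)) (m i)) \<and>
        (\<Sum>i\<in>S. m i) = k"
    proof (intro exI conjI)
      show "S0 \<noteq> {}" by (rule S0ne)
      show "M_set (adjoint_op T) \<inter> {y. y extreme_point_of cball 0 1}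
          = {s *\<^sub>R unit_vec i | s i. s \<in> {-1, 1} \<and> i \<in> S0}" by (rule MExt)
      show "\<forall>i\<in>S0. k_smooth (blinfun_apply (adjoint_op T) (unit_vec i)) (dim (Jset (f i)))"
        by (auto simp: k_smooth_def adjf S0_def)
      show "(\<Sum>i\<in>S0. dim (Jset (f i))) = k" using ks dimJ by (simp add: k_smooth_def)
    qed
  next
    assume "\<exists>S m. S \<noteq> {} \<and>
        M_set (adjoint_op T) \<inter> {y. y extreme_point_of cball 0 1}
          = {s *\<^sub>R unit_vec i | s i. s \<in> {-1, 1} \<and> i \<in> S} \<and>
        (\<forall>i\<in>S. k_smooth (blinfun_apply (adjoint_op T) (unit_vec i)) (m i)) \<and>
        (\<Sum>i\<in>S. m i) = k"
    then obtain S m where H: "M_set (adjoint_op T) \<inter> {y. y extreme_point_of cball 0 1}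
          = {s *\<^sub>R unit_vec i | s i. s \<in> {-1, 1} \<and> i \<in> S}"
      and ksm: "\<forall>i\<in>S. k_smooth (blinfun_apply (adjoint_op T) (unit_vec i)) (m i)"
      and sm: "(\<Sum>i\<in>S. m i) = k"
      by blast
    have seq: "{s *\<^sub>R unit_vec i | s i. s \<in> {-1, 1} \<and> i \<in> S}
          = {s *\<^sub>R (unit_vec i :: 'n lone) | s i. s \<in> {-1, 1} \<and> i \<in> S0}"
      using H MExt by (rule trans[OF sym])
    have SS: "S = S0"
    proof (rule set_eqI, rule iffI)
      fix i assume "i \<in> S"
      then have "1 *\<^sub>R (unit_vec i :: 'n lone) \<in> {s *\<^sub>R unit_vec i | s i. s \<in> {-1, 1} \<and> i \<in> S}" by blast
      then have "1 *\<^sub>R (unit_vec i :: 'n lone) \<in> {s *\<^sub>R unit_vec i | s i. s \<in> {-1, 1} \<and> i \<in> S0}" by (simp only: seq)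
      then obtain s j where "1 *\<^sub>R (unit_vec i :: 'n lone) = s *\<^sub>R unit_vec j" "j \<in> S0" by blast
      then show "i \<in> S0" using unit_eq[of 1 i s j] by auto
    next
      fix i assume "i \<in> S0"
      then have "1 *\<^sub>R (unit_vec i :: 'n lone) \<in> {s *\<^sub>R unit_vec i | s i. s \<in> {-1, 1} \<and> i \<in> S0}" by blast
      then have "1 *\<^sub>R (unit_vec i :: 'n lone) \<in> {s *\<^sub>R unit_vec i | s i. s \<in> {-1, 1} \<and> i \<in> S}" by (simp only: seq[symmetric])
      then obtain s j where "1 *\<^sub>R (unit_vec i :: 'n lone) = s *\<^sub>R unit_vec j" "j \<in> S" by blast
      then show "i \<in> S" using unit_eq[of 1 i s j] by auto
    qed
    have "m i = dim (Jset (f i))" if "i \<in> S" for i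
      using ksm that by (auto simp: k_smooth_def adjf)
    then have "k = (\<Sum>i\<in>S0. dim (Jset (f i)))" using sm SS by simp
    then show "k_smooth T k" using dimJ T1 by (simp add: k_smooth_def)
  qed
qed

end
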